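(* Let $(V,\nu)$ be a gauged space and $S\subseteq V$ a linear subspace. Then $S$ is a gauge ideal of $(V,\nu)$ if and only if there exist a gauged space $(W,\omega)$ and a gauge-bounded linear map $\phi:V\to W$ with $S=\ker\phi$. Moreover, when $S$ is a gauge ideal, $q(x+S)=\inf\{\nu(y):y\in x+S\}$ is a proper gauge on the algebraic quotient $V/S$, and the quotient map $\pi:(V,\nu)\to(V/S,q)$ is gauge-contractive with kernel $S$.
   Context: A gauge on a real vector space $V$ is a map $\nu:V\to[0,\infty)$ with $\nu(x+y)\le\nu(x)+\nu(y)$ and $\nu(tx)=t\nu(x)$ for all $x,y\in V$, $t>0$; it is proper if for every $x\neq0$, $\nu(x)\neq0$ or $\nu(-x)\neq0$; a gauged space is a pair $(V,\nu)$ with $\nu$ a proper gauge. A linear map $\phi:(V,\nu)\to(W,\omega)$ is gauge-bounded if there is $C>0$ with $\omega(\phi(x))\le C\nu(x)$ for all $x$, and gauge-contractive if $C=1$ works. A subspace $S$ is a gauge ideal if whenever $x\in V$ and there are sequences $(a_n),(b_n)\subseteq S$ with $\nu(x-a_n)\to0$ and $\nu(b_n-x)\to0$, then $x\in S$. *)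

theory Defs
  imports Complex_Main
begin

definition gauge :: "('a::real_vector \<Rightarrow> real) \<Rightarrow> bool" where
  "gauge \<nu> \<longleftrightarrow> (\<forall>x. 0 \<le> \<nu> x) \<and> (\<forall>x y. \<nu> (x + y) \<le> \<nu> x + \<nu> y)
      \<and> (\<forall>t x. t > 0 \<longrightarrow> \<nu> (t *\<^sub>R x) = t * \<nu> x)"

definition proper_gauge :: "('a::real_vector \<Rightarrow> real) \<Rightarrow> bool" where
  "proper_gauge \<nu> \<longleftrightarrow> gauge \<nu> \<and> (\<forall>x. x \<noteq> 0 \<longrightarrow> \<nu> x \<noteq> 0 \<or> \<nu> (- x) \<noteq> 0)"

text \<open>A gauged space (V, nu) is a real vector space type V with a proper gauge nu.\<close>

definition gauge_bounded ::
  "('a::real_vector \<Rightarrow> real) \<Rightarrow> ('b::real_vector \<Rightarrow> real) \<Rightarrow> ('a \<Rightarrow> 'b) \<Rightarrow> bool" where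
  "gauge_bounded \<nu> \<omega> \<phi> \<longleftrightarrow> (\<exists>C>0. \<forall>x. \<omega> (\<phi> x) \<le> C * \<nu> x)"

definition gauge_contractive ::
  "('a::real_vector \<Rightarrow> real) \<Rightarrow> ('b::real_vector \<Rightarrow> real) \<Rightarrow> ('a \<Rightarrow> 'b) \<Rightarrow> bool" where
  "gauge_contractive \<nu> \<omega> \<phi> \<longleftrightarrow> (\<forall>x. \<omega> (\<phi> x) \<le> \<nu> x)"

definition gauge_ideal :: "('a::real_vector \<Rightarrow> real) \<Rightarrow> 'a set \<Rightarrow> bool" where
  "gauge_ideal \<nu> S \<longleftrightarrow> (\<forall>x a b. (\<forall>n. a n \<in> S) \<and> (\<forall>n. b n \<in> S)
      \<and> (\<lambda>n. \<nu> (x - a n)) \<longlonglongrightarrow> 0 \<and> (\<lambda>n. \<nu> (b n - x)) \<longlonglongrightarrow> 0 \<longrightarrow> x \<in> S)"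

definition coset :: "'a::real_vector set \<Rightarrow> 'a \<Rightarrow> 'a set" where
  "coset S x = (\<lambda>s. x + s) ` S"

definition quotient_space :: "'a::real_vector set \<Rightarrow> 'a set set" where
  "quotient_space S = range (coset S)"

definition qadd :: "'a::real_vector set \<Rightarrow> 'a set \<Rightarrow> 'a set" where
  "qadd C D = {c + d | c d. c \<in> C \<and> d \<in> D}"

definition qscale :: "real \<Rightarrow> 'a::real_vector set \<Rightarrow> 'a set" where
  "qscale t C = (\<lambda>c. t *\<^sub>R c) ` C"

definition qneg :: "'a::real_vector set \<Rightarrow> 'a set" where
  "qneg C = uminus ` C"

definition quotient_gauge :: "('a::real_vector \<Rightarrow> real) \<Rightarrow> 'a set \<Rightarrow> real" where
  "quotient_gauge \<nu> C = Inf (\<nu> ` C)"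

end

theory Submission
  imports Defs
begin

lemma proj_exists:
  fixes S :: "'a::real_vector set"
  assumes "subspace S"
  shows "\<exists>\<phi>. linear \<phi> \<and> {x. \<phi> x = 0} = S \<and> (\<forall>x. \<phi> (\<phi> x) = \<phi> x)"
proof -
  obtain B where B: "B \<subseteq> S" "independent B" "S \<subseteq> span B"
    by (rule maximal_independent_subset[of S])
  have SB: "span B = S" by (rule span_subspace[OF B(1) B(3) assms])
  define E where "E = extend_basis B"
  have E1: "B \<subseteq> E" unfolding E_def by (rule extend_basis_superset[OF B(2)])
  have E2: "independent E" unfolding E_def by (rule independent_extend_basis[OF B(2)])
  have E3: "span E = UNIV" unfolding E_def by (rule span_extend_basis[OF B(2)])
  obtain \<phi> where \<phi>: "linear \<phi>" "\<forall>b\<in>E. \<phi> b = (if b \<in> B then 0 else b)"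
    using linear_independent_extend[OF E2, of "\<lambda>b. if b \<in> B then 0 else b"] by blast
  have zero: "\<phi> x = 0" if "x \<in> span B" for x
  proof (rule linear_eq_on[OF \<phi>(1) linear_zero that])
    fix b assume "b \<in> B" then show "\<phi> b = 0" using \<phi>(2) E1 by auto
  qed
  have ident: "\<phi> x = x" if "x \<in> span (E - B)" for x
  proof -
    have "\<phi> x = id x"
    proof (rule linear_eq_on[OF \<phi>(1) linear_id that])
      fix b assume "b \<in> E - B" then show "\<phi> b = id b" using \<phi>(2) by auto
    qed
    then show ?thesis by simp
  qed
  have dec: "\<exists>u v. x = u + v \<and> u \<in> span B \<and> v \<in> span (E - B)" for x
  proof -
    have "B \<union> (E - B) = E" using E1 by blast
    then have "x \<in> span (B \<union> (E - B))" using E3 by simp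
    then show ?thesis unfolding span_Un by blast
  qed
  have phiv: "\<phi> x = v" if "x = u + v" "u \<in> span B" "v \<in> span (E - B)" for x u v
  proof -
    have "\<phi> x = \<phi> u + \<phi> v" using that(1) linear_add[OF \<phi>(1)] by simp
    then show ?thesis using zero[OF that(2)] ident[OF that(3)] by simp
  qed
  have ker: "{x. \<phi> x = 0} = S"
  proof (rule set_eqI, rule iffI)
    fix x assume "x \<in> {x. \<phi> x = 0}"
    then have x0: "\<phi> x = 0" by simp
    obtain u v where uv: "x = u + v" "u \<in> span B" "v \<in> span (E - B)" using dec by blast
    then have "v = 0" using phiv[OF uv] x0 by simp
    then show "x \<in> S" using uv SB by simp
  next
    fix x assume "x \<in> S" then show "x \<in> {x. \<phi> x = 0}" using zero SB by simp
  qed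
  have idem: "\<phi> (\<phi> x) = \<phi> x" for x
  proof -
    obtain u v where uv: "x = u + v" "u \<in> span B" "v \<in> span (E - B)" using dec by blast
    then show ?thesis using phiv[OF uv] ident[OF uv(3)] by simp
  qed
  show ?thesis using \<phi>(1) ker idem by blast
qed

lemma gauge_zero: assumes "gauge \<nu>" shows "\<nu> 0 = 0"
proof -
  have h: "\<forall>t x. t > 0 \<longrightarrow> \<nu> (t *\<^sub>R x) = t * \<nu> x" using assms unfolding gauge_def by blast
  have "\<nu> 0 = 2 * \<nu> 0" using h[rule_format, of 2 0] by simp
  then show ?thesis by simp
qed

lemma ker_ideal:
  fixes \<nu> :: "'a::real_vector \<Rightarrow> real" and \<omega> :: "'b::real_vector \<Rightarrow> real"
  assumes "proper_gauge \<omega>" "linear \<phi>" "gauge_bounded \<nu> \<omega> \<phi>" "S = {x. \<phi> x = 0}"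
  shows "gauge_ideal \<nu> S"
  unfolding gauge_ideal_def
proof (intro allI impI, elim conjE)
  fix x a b
  assume a: "\<forall>n. a n \<in> S" and b: "\<forall>n. b n \<in> S"
    and la: "(\<lambda>n. \<nu> (x - a n)) \<longlonglongrightarrow> 0" and lb: "(\<lambda>n. \<nu> (b n - x)) \<longlonglongrightarrow> 0"
  have g: "gauge \<omega>" and pr: "\<forall>x. x \<noteq> 0 \<longrightarrow> \<omega> x \<noteq> 0 \<or> \<omega> (- x) \<noteq> 0"
    using assms(1) unfolding proper_gauge_def by auto
  obtain C where C: "C > 0" "\<forall>x. \<omega> (\<phi> x) \<le> C * \<nu> x"
    using assms(3) unfolding gauge_bounded_def by blast
  have pa: "\<phi> (a n) = 0" "\<phi> (b n) = 0" for n using a b assms(4) by auto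
  have "\<omega> (\<phi> x) \<le> C * \<nu> (x - a n)" for n
  proof -
    have "\<phi> (x - a n) = \<phi> x" using pa linear_diff[OF assms(2)] by simp
    then show ?thesis using C(2) by metis
  qed
  moreover have "(\<lambda>n. C * \<nu> (x - a n)) \<longlonglongrightarrow> 0" using tendsto_mult_right_zero[OF la] by simp
  ultimately have "\<omega> (\<phi> x) \<le> 0" using LIMSEQ_le_const[of "\<lambda>n. C * \<nu> (x - a n)" 0 "\<omega> (\<phi> x)"] by blast
  then have z1: "\<omega> (\<phi> x) = 0" using g unfolding gauge_def by (meson order_antisym)
  have "\<omega> (- \<phi> x) \<le> C * \<nu> (b n - x)" for n
  proof -
    have "\<phi> (b n - x) = - \<phi> x" using pa linear_diff[OF assms(2)] by simp
    then show ?thesis using C(2) by metis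
  qed
  moreover have "(\<lambda>n. C * \<nu> (b n - x)) \<longlonglongrightarrow> 0" using tendsto_mult_right_zero[OF lb] by simp
  ultimately have "\<omega> (- \<phi> x) \<le> 0" using LIMSEQ_le_const[of "\<lambda>n. C * \<nu> (b n - x)" 0 "\<omega> (- \<phi> x)"] by blast
  then have z2: "\<omega> (- \<phi> x) = 0" using g unfolding gauge_def by (meson order_antisym)
  have "\<phi> x = 0" using pr z1 z2 by blast
  then show "x \<in> S" using assms(4) by simp
qed

lemma coset_eq_iff:
  assumes "subspace S"
  shows "coset S x = coset S y \<longleftrightarrow> x - y \<in> S"
proof
  assume h: "coset S x = coset S y"
  have "x \<in> coset S x" unfolding coset_def using subspace_0[OF assms] by force
  then obtain s where "s \<in> S" "x = y + s" using h unfolding coset_def by auto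
  then show "x - y \<in> S" by simp
next
  assume h: "x - y \<in> S"
  show "coset S x = coset S y"
  proof (auto simp: coset_def image_iff)
    fix s assume "s \<in> S"
    then show "\<exists>t\<in>S. x + s = y + t" using h subspace_add[OF assms] by (intro bexI[of _ "(x - y) + s"]) auto
  next
    fix s assume "s \<in> S"
    then show "\<exists>t\<in>S. y + s = x + t" using h subspace_diff[OF assms] by (intro bexI[of _ "s - (x - y)"]) auto
  qed
qed

definition QG :: "('a::real_vector \<Rightarrow> real) \<Rightarrow> 'a set \<Rightarrow> 'a \<Rightarrow> real" where
  "QG \<nu> S x = quotient_gauge \<nu> (coset S x)"

lemma QG_alt: "QG \<nu> S x = Inf ((\<lambda>s. \<nu> (x + s)) ` S)"
  unfolding QG_def quotient_gauge_def coset_def by (simp add: image_image)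

context
  fixes \<nu> :: "'a::real_vector \<Rightarrow> real" and S :: "'a set"
  assumes g: "gauge \<nu>" and sS: "subspace S"
begin

lemma nn: "0 \<le> \<nu> x" using g unfolding gauge_def by auto
lemma tri: "\<nu> (x + y) \<le> \<nu> x + \<nu> y" using g unfolding gauge_def by auto
lemma hom: "t > 0 \<Longrightarrow> \<nu> (t *\<^sub>R x) = t * \<nu> x" using g unfolding gauge_def by auto

lemma ne: "S \<noteq> {}" using subspace_0[OF sS] by auto

lemma bdd: "bdd_below ((\<lambda>s. \<nu> (x + s)) ` S)"
  using nn by (intro bdd_belowI[of _ 0]) auto

lemma QG_nn: "0 \<le> QG \<nu> S x"
  unfolding QG_alt using ne nn by (intro cInf_greatest) auto

lemma QG_le: "s \<in> S \<Longrightarrow> QG \<nu> S x \<le> \<nu> (x + s)"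
  unfolding QG_alt by (rule cInf_lower[OF _ bdd]) auto

lemma QG_ge: "(\<And>s. s \<in> S \<Longrightarrow> c \<le> \<nu> (x + s)) \<Longrightarrow> c \<le> QG \<nu> S x"
  unfolding QG_alt using ne by (intro cInf_greatest) auto

lemma QG_self: "QG \<nu> S x \<le> \<nu> x"
  using QG_le[of 0 x] subspace_0[OF sS] by simp

lemma QG_add: "QG \<nu> S (x + y) \<le> QG \<nu> S x + QG \<nu> S y"
proof -
  have "QG \<nu> S (x + y) - \<nu> (y + s') \<le> \<nu> (x + s)" if "s \<in> S" "s' \<in> S" for s s'
  proof -
    have "QG \<nu> S (x + y) \<le> \<nu> ((x + y) + (s + s'))" using QG_le subspace_add[OF sS] that by blast
    also have "(x + y) + (s + s') = (x + s) + (y + s')" by (simp add: algebra_simps)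
    finally show ?thesis using tri[of "x + s" "y + s'"] by simp
  qed
  then have "QG \<nu> S (x + y) - \<nu> (y + s') \<le> QG \<nu> S x" if "s' \<in> S" for s'
    using that by (intro QG_ge) auto
  then have h: "\<And>s'. s' \<in> S \<Longrightarrow> QG \<nu> S (x + y) - QG \<nu> S x \<le> \<nu> (y + s')"
    by (smt (verit))
  have "QG \<nu> S (x + y) - QG \<nu> S x \<le> QG \<nu> S y" by (rule QG_ge) (rule h)
  then show ?thesis by simp
qed

lemma QG_scale_le: assumes "t > 0" shows "QG \<nu> S (t *\<^sub>R x) \<le> t * QG \<nu> S x"
proof -
  have "QG \<nu> S (t *\<^sub>R x) / t \<le> \<nu> (x + s)" if "s \<in> S" for s
  proof -
    have "QG \<nu> S (t *\<^sub>R x) \<le> \<nu> (t *\<^sub>R x + t *\<^sub>R s)" using QG_le subspace_scale[OF sS that] by blast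
    also have "\<dots> = t * \<nu> (x + s)" using hom[OF assms] by (simp add: scaleR_add_right[symmetric])
    finally show ?thesis using assms by (simp add: divide_le_eq mult.commute)
  qed
  then have "QG \<nu> S (t *\<^sub>R x) / t \<le> QG \<nu> S x" by (intro QG_ge) auto
  then show ?thesis using assms by (simp add: divide_le_eq mult.commute)
qed

lemma QG_scale: assumes "t > 0" shows "QG \<nu> S (t *\<^sub>R x) = t * QG \<nu> S x"
proof -
  have "QG \<nu> S x = QG \<nu> S ((1/t) *\<^sub>R (t *\<^sub>R x))" using assms by simp
  also have "\<dots> \<le> (1/t) * QG \<nu> S (t *\<^sub>R x)" by (rule QG_scale_le) (use assms in simp)
  finally have "t * QG \<nu> S x \<le> t * ((1/t) * QG \<nu> S (t *\<^sub>R x))" using assms by (intro mult_left_mono) auto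
  then have "t * QG \<nu> S x \<le> QG \<nu> S (t *\<^sub>R x)" using assms by simp
  then show ?thesis using QG_scale_le[OF assms, of x] by simp
qed

lemma QG_zero_seq:
  assumes "QG \<nu> S x = 0"
  shows "\<exists>a. (\<forall>n. a n \<in> S) \<and> (\<lambda>n. \<nu> (x - a n)) \<longlonglongrightarrow> 0"
proof -
  have "\<exists>s\<in>S. \<nu> (x - s) < 1 / (real n + 1)" for n
  proof -
    have "Inf ((\<lambda>s. \<nu> (x + s)) ` S) < 1 / (real n + 1)" using assms unfolding QG_alt by simp
    then obtain s where "s \<in> S" "\<nu> (x + s) < 1 / (real n + 1)"
      using cInf_lessD[of "(\<lambda>s. \<nu> (x + s)) ` S"] ne by auto
    then show ?thesis using subspace_neg[OF sS] by (intro bexI[of _ "- s"]) auto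
  qed
  then obtain a where a: "\<forall>n. a n \<in> S \<and> \<nu> (x - a n) < 1 / (real n + 1)" by metis
  have "(\<lambda>n. \<nu> (x - a n)) \<longlonglongrightarrow> 0"
  proof (rule tendsto_sandwich[of "\<lambda>n. 0" _ _ "\<lambda>n. 1 / (real n + 1)"])
    show "\<forall>\<^sub>F n in sequentially. 0 \<le> \<nu> (x - a n)" using nn by simp
    show "\<forall>\<^sub>F n in sequentially. \<nu> (x - a n) \<le> 1 / (real n + 1)" using a by (simp add: less_imp_le)
    show "(\<lambda>n. 1 / (real n + 1)) \<longlonglongrightarrow> 0" using LIMSEQ_inverse_real_of_nat by (simp add: inverse_eq_divide add.commute)
  qed simp
  then show ?thesis using a by blast
qed

lemma QG_cong: "x - y \<in> S \<Longrightarrow> QG \<nu> S x = QG \<nu> S y"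
  unfolding QG_def by (metis coset_eq_iff[OF sS])

lemma QG_proper:
  assumes "gauge_ideal \<nu> S" "x \<notin> S"
  shows "QG \<nu> S x \<noteq> 0 \<or> QG \<nu> S (- x) \<noteq> 0"
proof (rule ccontr)
  assume "\<not> ?thesis"
  then have h: "QG \<nu> S x = 0" "QG \<nu> S (- x) = 0" by auto
  obtain a where a: "\<forall>n. a n \<in> S" "(\<lambda>n. \<nu> (x - a n)) \<longlonglongrightarrow> 0" using QG_zero_seq[OF h(1)] by blast
  obtain b where b: "\<forall>n. b n \<in> S" "(\<lambda>n. \<nu> (- x - b n)) \<longlonglongrightarrow> 0" using QG_zero_seq[OF h(2)] by blast
  have "- b n - x = - x - b n" for n by (metis add.commute diff_conv_add_uminus)
  then have "(\<lambda>n. \<nu> (- b n - x)) = (\<lambda>n. \<nu> (- x - b n))" by (simp only:)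
  then have "(\<lambda>n. \<nu> (- b n - x)) \<longlonglongrightarrow> 0" using b(2) by (simp only:)
  moreover have "\<forall>n. - b n \<in> S" using b(1) subspace_neg[OF sS] by auto
  moreover have gi': "\<And>x a b. \<lbrakk>\<forall>n. a n \<in> S; \<forall>n. b n \<in> S; (\<lambda>n. \<nu> (x - a n)) \<longlonglongrightarrow> 0; (\<lambda>n. \<nu> (b n - x)) \<longlonglongrightarrow> 0\<rbrakk> \<Longrightarrow> x \<in> S"
    using assms(1) unfolding gauge_ideal_def by blast
  ultimately have "x \<in> S" using gi'[where x=x and a=a and b="\<lambda>n. - b n"] a by blast
  then show False using assms(2) by simp
qed

end

lemma qadd_coset: assumes "subspace S" shows "qadd (coset S x) (coset S y) = coset S (x + y)"
proof (rule set_eqI, rule iffI)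
  fix z assume "z \<in> qadd (coset S x) (coset S y)"
  then obtain s s' where ss: "s \<in> S" "s' \<in> S" "z = (x + s) + (y + s')" unfolding qadd_def coset_def by auto
  then have "z = (x + y) + (s + s')" "s + s' \<in> S" using subspace_add[OF assms] by (auto simp: algebra_simps)
  then show "z \<in> coset S (x + y)" unfolding coset_def by blast
next
  fix z assume "z \<in> coset S (x + y)"
  then obtain s where s: "s \<in> S" "z = x + y + s" unfolding coset_def by auto
  then have "z = (x + s) + (y + 0)" by (simp add: algebra_simps)
  moreover have "x + s \<in> coset S x" "y + 0 \<in> coset S y" unfolding coset_def using s(1) subspace_0[OF assms] by blast+
  ultimately show "z \<in> qadd (coset S x) (coset S y)" unfolding qadd_def by blast
qed

lemma scale_image: assumes "subspace S" "t \<noteq> 0" shows "(\<lambda>s. t *\<^sub>R s) ` S = S"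
proof
  show "(\<lambda>s. t *\<^sub>R s) ` S \<subseteq> S" using subspace_scale[OF assms(1)] by auto
  show "S \<subseteq> (\<lambda>s. t *\<^sub>R s) ` S"
  proof
    fix s assume "s \<in> S"
    then have "(1/t) *\<^sub>R s \<in> S" using subspace_scale[OF assms(1)] by blast
    moreover have "s = t *\<^sub>R ((1/t) *\<^sub>R s)" using assms(2) by simp
    ultimately show "s \<in> (\<lambda>s. t *\<^sub>R s) ` S" by blast
  qed
qed

lemma qscale_coset: assumes "subspace S" "t \<noteq> 0" shows "qscale t (coset S x) = coset S (t *\<^sub>R x)"
proof -
  have "qscale t (coset S x) = (\<lambda>s. t *\<^sub>R x + s) ` ((\<lambda>s. t *\<^sub>R s) ` S)"
    unfolding qscale_def coset_def image_image by (simp add: scaleR_add_right)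
  then show ?thesis using scale_image[OF assms] unfolding coset_def by simp
qed

lemma qneg_coset: assumes "subspace S" shows "qneg (coset S x) = coset S (- x)"
proof -
  have "qneg (coset S x) = (\<lambda>s. - x + s) ` ((\<lambda>s. (-1::real) *\<^sub>R s) ` S)"
    unfolding qneg_def coset_def image_image by simp
  then show ?thesis using scale_image[OF assms, of "-1"] unfolding coset_def by simp
qed

theorem proposition2p25:
  fixes \<nu> :: "'a::real_vector \<Rightarrow> real" and S :: "'a set"
  assumes "proper_gauge \<nu>" and "subspace S"
  shows "(gauge_ideal \<nu> S \<longleftrightarrow>
           (\<exists>(\<omega>::'a \<Rightarrow> real) \<phi>. proper_gauge \<omega> \<and> linear \<phi> \<and> gauge_bounded \<nu> \<omega> \<phi>
                \<and> S = {x. \<phi> x = 0}))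
    \<and> (\<forall>(\<omega>::'b::real_vector \<Rightarrow> real) (\<phi>::'a \<Rightarrow> 'b).
           proper_gauge \<omega> \<and> linear \<phi> \<and> gauge_bounded \<nu> \<omega> \<phi> \<and> S = {x. \<phi> x = 0}
           \<longrightarrow> gauge_ideal \<nu> S)
    \<and> (gauge_ideal \<nu> S \<longrightarrow>
           (\<forall>C\<in>quotient_space S. 0 \<le> quotient_gauge \<nu> C)
         \<and> (\<forall>C\<in>quotient_space S. \<forall>D\<in>quotient_space S.
              quotient_gauge \<nu> (qadd C D) \<le> quotient_gauge \<nu> C + quotient_gauge \<nu> D)
         \<and> (\<forall>C\<in>quotient_space S. \<forall>t>0. quotient_gauge \<nu> (qscale t C) = t * quotient_gauge \<nu> C)
         \<and> (\<forall>C\<in>quotient_space S. C \<noteq> coset S 0 \<longrightarrow>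
              quotient_gauge \<nu> C \<noteq> 0 \<or> quotient_gauge \<nu> (qneg C) \<noteq> 0)
         \<and> (\<forall>x. quotient_gauge \<nu> (coset S x) \<le> \<nu> x)
         \<and> {x. coset S x = coset S 0} = S)"
  proof -
  have g: "gauge \<nu>" and pr: "\<forall>x. x \<noteq> 0 \<longrightarrow> \<nu> x \<noteq> 0 \<or> \<nu> (- x) \<noteq> 0"
    using assms(1) unfolding proper_gauge_def by auto
  note sS = assms(2)
  have P2: "\<forall>(\<omega>::'b::real_vector \<Rightarrow> real) (\<phi>::'a \<Rightarrow> 'b).
           proper_gauge \<omega> \<and> linear \<phi> \<and> gauge_bounded \<nu> \<omega> \<phi> \<and> S = {x. \<phi> x = 0}
           \<longrightarrow> gauge_ideal \<nu> S"
  proof (intro allI impI, elim conjE)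
    fix \<omega> :: "'b \<Rightarrow> real" and \<phi> :: "'a \<Rightarrow> 'b"
    assume "proper_gauge \<omega>" "linear \<phi>" "gauge_bounded \<nu> \<omega> \<phi>" "S = {x. \<phi> x = 0}"
    then show "gauge_ideal \<nu> S" by (rule ker_ideal)
  qed
  have fwd: "\<exists>(\<omega>::'a \<Rightarrow> real) \<phi>. proper_gauge \<omega> \<and> linear \<phi> \<and> gauge_bounded \<nu> \<omega> \<phi>
                \<and> S = {x. \<phi> x = 0}" if gi: "gauge_ideal \<nu> S"
  proof -
    obtain \<phi> :: "'a \<Rightarrow> 'a" where \<phi>: "linear \<phi>" "{x. \<phi> x = 0} = S" "\<forall>x. \<phi> (\<phi> x) = \<phi> x"
      using proj_exists[OF sS] by blast
    have inS: "y - \<phi> y \<in> S" for y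
    proof -
      have "\<phi> (y - \<phi> y) = 0" using linear_diff[OF \<phi>(1), of y "\<phi> y"] \<phi>(3) by simp
      then show ?thesis using \<phi>(2) by blast
    qed
    define \<omega> where "\<omega> y = QG \<nu> S y + \<nu> (y - \<phi> y)" for y
    have \<omega>nn: "0 \<le> \<omega> y" for y unfolding \<omega>_def using QG_nn[OF g sS] nn[OF g sS] by (simp add: add_nonneg_nonneg)
    have "gauge \<omega>" unfolding gauge_def
    proof (intro conjI allI impI)
      fix x show "0 \<le> \<omega> x" by (rule \<omega>nn)
    next
      fix x y
      have e: "(x + y) - \<phi> (x + y) = (x - \<phi> x) + (y - \<phi> y)" using linear_add[OF \<phi>(1)] by simp
      show "\<omega> (x + y) \<le> \<omega> x + \<omega> y" unfolding \<omega>_def e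
        using QG_add[OF g sS, of x y] tri[OF g sS, of "x - \<phi> x" "y - \<phi> y"] by linarith
    next
      fix t :: real and x assume t: "t > 0"
      have e: "t *\<^sub>R x - \<phi> (t *\<^sub>R x) = t *\<^sub>R (x - \<phi> x)" using linear_scale[OF \<phi>(1)] by (simp add: scaleR_diff_right)
      show "\<omega> (t *\<^sub>R x) = t * \<omega> x" unfolding \<omega>_def e
        using QG_scale[OF g sS t] hom[OF g sS t] by (simp add: distrib_left)
    qed
    moreover have "\<omega> y \<noteq> 0 \<or> \<omega> (- y) \<noteq> 0" if "y \<noteq> 0" for y
    proof (cases "y \<in> S")
      case True
      then have p0: "\<phi> y = 0" using \<phi>(2) by blast
      then have p1: "\<phi> (- y) = 0" using linear_neg[OF \<phi>(1), of y] by simp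
      have e: "\<omega> y = QG \<nu> S y + \<nu> y" "\<omega> (- y) = QG \<nu> S (- y) + \<nu> (- y)"
        unfolding \<omega>_def using p0 p1 by simp_all
      have "\<nu> y \<noteq> 0 \<or> \<nu> (- y) \<noteq> 0" using pr that by blast
      then show ?thesis unfolding e using QG_nn[OF g sS, of y] QG_nn[OF g sS, of "- y"]
        nn[OF g sS, of y] nn[OF g sS, of "- y"] by linarith
    next
      case False
      then have "QG \<nu> S y \<noteq> 0 \<or> QG \<nu> S (- y) \<noteq> 0" using QG_proper[OF g sS gi] by blast
      then show ?thesis unfolding \<omega>_def using QG_nn[OF g sS, of y] QG_nn[OF g sS, of "- y"]
        nn[OF g sS, of "y - \<phi> y"] nn[OF g sS, of "- y - \<phi> (- y)"] by linarith
    qed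
    ultimately have "proper_gauge \<omega>" unfolding proper_gauge_def by blast
    moreover have "gauge_bounded \<nu> \<omega> \<phi>" unfolding gauge_bounded_def
    proof (intro exI[of _ 1] conjI allI)
      fix x
      have "\<omega> (\<phi> x) = QG \<nu> S (\<phi> x)" unfolding \<omega>_def using \<phi>(3) gauge_zero[OF g] by simp
      also have "\<dots> = QG \<nu> S x" using QG_cong[OF g sS, of x "\<phi> x"] inS by simp
      also have "\<dots> \<le> \<nu> x" by (rule QG_self[OF g sS])
      finally show "\<omega> (\<phi> x) \<le> 1 * \<nu> x" by simp
    qed simp
    moreover have "S = {x. \<phi> x = 0}" using \<phi>(2) by simp
    ultimately have F: "proper_gauge \<omega> \<and> linear \<phi> \<and> gauge_bounded \<nu> \<omega> \<phi> \<and> S = {x. \<phi> x = 0}"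
      using \<phi>(1) by (intro conjI)
    show ?thesis by (rule exI[of _ \<omega>], rule exI[of _ \<phi>], rule F)
  qed
  have P1: "gauge_ideal \<nu> S \<longleftrightarrow>
           (\<exists>(\<omega>::'a \<Rightarrow> real) \<phi>. proper_gauge \<omega> \<and> linear \<phi> \<and> gauge_bounded \<nu> \<omega> \<phi>
                \<and> S = {x. \<phi> x = 0})"
  proof
    assume "gauge_ideal \<nu> S" then show "\<exists>(\<omega>::'a \<Rightarrow> real) \<phi>. proper_gauge \<omega> \<and> linear \<phi> \<and> gauge_bounded \<nu> \<omega> \<phi>
                \<and> S = {x. \<phi> x = 0}" by (rule fwd)
  next
    assume "\<exists>(\<omega>::'a \<Rightarrow> real) \<phi>. proper_gauge \<omega> \<and> linear \<phi> \<and> gauge_bounded \<nu> \<omega> \<phi>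
                \<and> S = {x. \<phi> x = 0}"
    then show "gauge_ideal \<nu> S" by (elim exE conjE) (rule ker_ideal; assumption)
  qed
  have QS: "C \<in> quotient_space S \<Longrightarrow> \<exists>x. C = coset S x" for C
    unfolding quotient_space_def by auto
  have qg: "quotient_gauge \<nu> (coset S x) = QG \<nu> S x" for x unfolding QG_def by simp
  have c0: "coset S x = coset S 0 \<longleftrightarrow> x \<in> S" for x using coset_eq_iff[OF sS] by simp
  have P3: "gauge_ideal \<nu> S \<longrightarrow>
           (\<forall>C\<in>quotient_space S. 0 \<le> quotient_gauge \<nu> C)
         \<and> (\<forall>C\<in>quotient_space S. \<forall>D\<in>quotient_space S.
              quotient_gauge \<nu> (qadd C D) \<le> quotient_gauge \<nu> C + quotient_gauge \<nu> D)
         \<and> (\<forall>C\<in>quotient_space S. \<forall>t>0. quotient_gauge \<nu> (qscale t C) = t * quotient_gauge \<nu> C)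
         \<and> (\<forall>C\<in>quotient_space S. C \<noteq> coset S 0 \<longrightarrow>
              quotient_gauge \<nu> C \<noteq> 0 \<or> quotient_gauge \<nu> (qneg C) \<noteq> 0)
         \<and> (\<forall>x. quotient_gauge \<nu> (coset S x) \<le> \<nu> x)
         \<and> {x. coset S x = coset S 0} = S"
  proof (intro impI conjI ballI allI)
    fix C assume "C \<in> quotient_space S"
    then obtain x where "C = coset S x" using QS by blast
    then show "0 \<le> quotient_gauge \<nu> C" using qg QG_nn[OF g sS] by simp
  next
    fix C D assume "C \<in> quotient_space S" "D \<in> quotient_space S"
    then obtain x y where "C = coset S x" "D = coset S y" using QS by blast
    then show "quotient_gauge \<nu> (qadd C D) \<le> quotient_gauge \<nu> C + quotient_gauge \<nu> D"
      using qg QG_add[OF g sS] qadd_coset[OF sS] by simp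
  next
    fix C and t :: real assume "C \<in> quotient_space S" "t > 0"
    then obtain x where "C = coset S x" using QS by blast
    then show "quotient_gauge \<nu> (qscale t C) = t * quotient_gauge \<nu> C"
      using qg QG_scale[OF g sS \<open>t > 0\<close>] qscale_coset[OF sS] \<open>t > 0\<close> by simp
  next
    fix C assume gi: "gauge_ideal \<nu> S" and "C \<in> quotient_space S"
    then obtain x where x: "C = coset S x" using QS by blast
    assume "C \<noteq> coset S 0"
    then have "x \<notin> S" using x c0 by simp
    then show "quotient_gauge \<nu> C \<noteq> 0 \<or> quotient_gauge \<nu> (qneg C) \<noteq> 0"
      using QG_proper[OF g sS gi] x qg qneg_coset[OF sS] by simp
  next
    fix x show "quotient_gauge \<nu> (coset S x) \<le> \<nu> x" using qg QG_self[OF g sS] by simp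
  next
    show "{x. coset S x = coset S 0} = S" using c0 by simp
  qed
  show ?thesis by (rule conjI[OF P1 conjI[OF P2 P3]])
qed

end
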